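(* Let $\Psi$ map $\bar t\in S^*$ to $\Psi(\bar t)=\{(\bar t\circ a)\restriction n:\ n\in\omega,\ a \text{ an assignment}\}$. Then for every $\bar t\in S^*$, $\Psi(\bar t)$ is a perfect subtree of $2^{<\omega}$; $\Psi$ is surjective onto Sacks forcing; $\Psi$ preserves $\le$; and $\Psi$ preserves incompatibility. In particular $\Psi$ is a surjective complete embedding of $S^*$ into Sacks forcing.
   Context: Terms. Fix a set $X$ of variable symbols, each taking values in $\{0,1\}$. An $X$-term $t$ is given by a finite sequence of variables $(v_0,\dots,v_{l-1})$ ($l\ge0$) and a function $f:2^l\to2$; a variable $v$ is identified with the term $((v),\mathrm{id})$. An assignment is a function $a:X\to2$; it extends to terms by $t\circ a=f(v_0\circ a,\dots,v_{l-1}\circ a)$. A substitution $\phi$ maps each variable to an $X$-term; $t\circ\phi$ is the term obtained by replacing each variable $v$ in $t$ by $\phi(v)$, and for a family $\bar t=(t_i)$ of terms, $\bar t\circ\phi=(t_i\circ\phi)$; for a family $\bar t=(t_i)$, $\bar t\circ a=(t_i\circ a)$. Terms are identified modulo $t=^*s$ iff $t\circ a=s\circ a$ for all assignments $a$; all equalities of terms are meant modulo $=^*$. A term depends only on variables in $Y\subseteq X$ if it is $=^*$ to a term using only variables from $Y$. A term or variable $s$ is determined by terms $t_0,\dots,t_n$ if for all assignments $a,b$, $(t_i\circ a)_{i\le n}=(t_i\circ b)_{i\le n}$ implies $s\circ a=s\circ b$. Here $X=\{x_j:j\in\omega\}$. $S^*$ is the set of sequences $\bar t=(t_i)_{i\in\omega}$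 of terms such that (1) $t_i$ depends only on the variables $x_j$ with $j\le i$, and (2) each $x_j$ is determined by finitely many $t_i$. An element $\phi\in S^*$ is regarded as the substitution $x_i\mapsto\phi_i$. The order: $\bar t'\le\bar t$ iff there is $\phi\in S^*$ with $\bar t'=\bar t\circ\phi$. Sacks forcing is the set of perfect subtrees of $2^{<\omega}$ ordered by inclusion. *)

theory Defs
  imports Main
begin

text \<open>Terms are identified modulo =*, so a bterm is represented by its semantics, a function
  from assignments to bool that depends on only finitely many variables.\<close>

type_synonym assignment = "nat \<Rightarrow> bool"
type_synonym bterm = "assignment \<Rightarrow> bool"

definition depends_only_on :: "bterm \<Rightarrow> nat set \<Rightarrow> bool" where
  "depends_only_on t Y \<longleftrightarrow> (\<forall>a b. (\<forall>j\<in>Y. a j = b j) \<longrightarrow> t a = t b)"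

definition is_term :: "bterm \<Rightarrow> bool" where
  "is_term t \<longleftrightarrow> (\<exists>Y. finite Y \<and> depends_only_on t Y)"

definition subst :: "bterm \<Rightarrow> (nat \<Rightarrow> bterm) \<Rightarrow> bterm" where
  "subst t \<phi> = (\<lambda>a. t (\<lambda>i. \<phi> i a))"

definition subst_seq :: "(nat \<Rightarrow> bterm) \<Rightarrow> (nat \<Rightarrow> bterm) \<Rightarrow> (nat \<Rightarrow> bterm)" where
  "subst_seq ts \<phi> = (\<lambda>i. subst (ts i) \<phi>)"

definition Sstar :: "(nat \<Rightarrow> bterm) set" where
  "Sstar = {ts. (\<forall>i. is_term (ts i))
      \<and> (\<forall>i. depends_only_on (ts i) {j. j \<le> i})
      \<and> (\<forall>j. \<exists>F. finite F \<and>
            (\<forall>a b. (\<forall>i\<in>F. ts i a = ts i b) \<longrightarrow> a j = b j))}"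

definition Sstar_le :: "(nat \<Rightarrow> bterm) \<Rightarrow> (nat \<Rightarrow> bterm) \<Rightarrow> bool" where
  "Sstar_le ts' ts \<longleftrightarrow> (\<exists>\<phi>\<in>Sstar. ts' = subst_seq ts \<phi>)"

definition Sstar_incompatible :: "(nat \<Rightarrow> bterm) \<Rightarrow> (nat \<Rightarrow> bterm) \<Rightarrow> bool" where
  "Sstar_incompatible s t \<longleftrightarrow> \<not> (\<exists>r\<in>Sstar. Sstar_le r s \<and> Sstar_le r t)"

text \<open>Subtrees of 2^{<omega}: sets of finite bool lists.\<close>
definition perfect_tree :: "bool list set \<Rightarrow> bool" where
  "perfect_tree p \<longleftrightarrow> p \<noteq> {}
     \<and> (\<forall>s\<in>p. \<forall>n. take n s \<in> p)
     \<and> (\<forall>s\<in>p. \<exists>u\<in>p. length s \<le> length u \<and> take (length s) u = s \<and> u @ [False] \<in> p \<and> u @ [True] \<in> p)"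

definition Sacks :: "bool list set set" where
  "Sacks = {p. perfect_tree p}"

definition Sacks_incompatible :: "bool list set \<Rightarrow> bool list set \<Rightarrow> bool" where
  "Sacks_incompatible p q \<longleftrightarrow> \<not> (\<exists>r\<in>Sacks. r \<subseteq> p \<and> r \<subseteq> q)"

definition Psi :: "(nat \<Rightarrow> bterm) \<Rightarrow> bool list set" where
  "Psi ts = {map (\<lambda>i. ts i a) [0..<n] | n a. True}"

end

theory Submission
  imports Defs
begin

definition spl :: "bool list set \<Rightarrow> bool list \<Rightarrow> bool" where
  "spl p v \<longleftrightarrow> v @ [False] \<in> p \<and> v @ [True] \<in> p"

primrec walk :: "bool list set \<Rightarrow> (nat \<Rightarrow> nat) \<Rightarrow> assignment \<Rightarrow> nat \<Rightarrow> bool list \<times> nat" where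
  "walk p B x 0 = ([], 0)"
| "walk p B x (Suc n) = (if spl p (fst (walk p B x n)) \<and> B (snd (walk p B x n)) \<le> n
     then (fst (walk p B x n) @ [x (snd (walk p B x n))], Suc (snd (walk p B x n)))
     else (fst (walk p B x n) @ [fst (walk p B x n) @ [True] \<in> p], snd (walk p B x n)))"

definition rho :: "bool list set \<Rightarrow> (nat \<Rightarrow> nat) \<Rightarrow> nat \<Rightarrow> bterm" where
  "rho p B i x = fst (walk p B x (Suc i)) ! i"

lemma walk_len: "length (fst (walk p B x n)) = n"
  by (induction n) auto

lemma walk_Suc_fst: "fst (walk p B x (Suc n)) = fst (walk p B x n) @ [fst (walk p B x (Suc n)) ! n]"
  by (auto simp: walk_len nth_append)

lemma walk_take: "m \<le> n \<Longrightarrow> fst (walk p B x m) = take m (fst (walk p B x n))"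
proof (induction n)
  case 0 then show ?case by (simp add: walk_len)
next
  case (Suc n)
  show ?case
  proof (cases "m = Suc n")
    case True then show ?thesis by (simp add: walk_len)
  next
    case False
    then have "m \<le> n" using Suc by simp
    then show ?thesis using Suc.IH walk_len[of p B x n]
      by (subst walk_Suc_fst) simp
  qed
qed

lemma walk_nth: "i < n \<Longrightarrow> fst (walk p B x n) ! i = rho p B i x"
  unfolding rho_def using walk_take[of "Suc i" n p B x] by simp

lemma walk_map: "map (\<lambda>i. rho p B i x) [0..<n] = fst (walk p B x n)"
  by (rule nth_equalityI) (auto simp: walk_len walk_nth)

lemma perfect_take: "perfect_tree p \<Longrightarrow> s \<in> p \<Longrightarrow> take n s \<in> p"
  unfolding perfect_tree_def by blast

lemma perfect_child: assumes "perfect_tree p" "v \<in> p" shows "v @ [True] \<in> p \<or> v @ [False] \<in> p"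
proof -
  obtain u where u: "u \<in> p" "length v \<le> length u" "take (length v) u = v" "u @ [False] \<in> p"
    using assms unfolding perfect_tree_def by blast
  have "take (Suc (length v)) (u @ [False]) \<in> p" using perfect_take[OF assms(1) u(4)] .
  moreover have "take (Suc (length v)) (u @ [False]) = v @ [(u @ [False]) ! length v]"
  proof -
    have "length v < length (u @ [False])" using u(2) by simp
    then have "take (Suc (length v)) (u @ [False]) = take (length v) (u @ [False]) @ [(u @ [False]) ! length v]"
      by (rule take_Suc_conv_app_nth)
    moreover have "take (length v) (u @ [False]) = v" using u(2,3) by simp
    ultimately show ?thesis by simp
  qed
  ultimately have "v @ [(u @ [False]) ! length v] \<in> p" by simp
  then show ?thesis by (cases "(u @ [False]) ! length v") auto
qed

lemma walk_Suc_eq: "walk p B x n = (v, c) \<Longrightarrow> walk p B x (Suc n) =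
   (if spl p v \<and> B c \<le> n then (v @ [x c], Suc c) else (v @ [v @ [True] \<in> p], c))"
  by simp

lemma walk_Suc_T: "walk p B x n = (v, c) \<Longrightarrow> spl p v \<Longrightarrow> B c \<le> n \<Longrightarrow>
   walk p B x (Suc n) = (v @ [x c], Suc c)"
  by simp

lemma walk_Suc_F: assumes "walk p B x n = (v, c)" "\<not> (spl p v \<and> B c \<le> n)"
  shows "walk p B x (Suc n) = (v @ [v @ [True] \<in> p], c)"
  by (simp only: walk_Suc_eq[OF assms(1)] if_not_P[OF assms(2)])

declare walk.simps(2)[simp del]

lemma walk_cnt_mono1: "snd (walk p B x n) \<le> snd (walk p B x (Suc n))"
  by (cases "walk p B x n") (simp add: walk_Suc_eq)

lemma walk_cnt_mono: "m \<le> n \<Longrightarrow> snd (walk p B x m) \<le> snd (walk p B x n)"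
  by (induction n rule: dec_induct) (auto intro: le_trans walk_cnt_mono1)

lemma walk_cnt_le: "snd (walk p B x n) \<le> n"
proof (induction n)
  case 0 then show ?case by simp
next
  case (Suc n) then show ?case by (cases "walk p B x n") (simp add: walk_Suc_eq)
qed

lemma walk_cnt_B: "k < snd (walk p B x n) \<Longrightarrow> B k < n"
proof (induction n)
  case 0 then show ?case by simp
next
  case (Suc n)
  obtain v c where e: "walk p B x n = (v, c)" by (cases "walk p B x n")
  show ?case
  proof (cases "spl p v \<and> B c \<le> n")
    case True
    then have "k < Suc c" using Suc.prems walk_Suc_T[OF e] by simp
    then have "k < c \<or> k = c" by auto
    then show ?thesis using Suc.IH e True by auto
  next
    case False
    then have "k < c" using Suc.prems walk_Suc_F[OF e False] by simp
    then show ?thesis using Suc.IH e by auto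
  qed
qed

lemma walk_dep: "(\<forall>k < snd (walk p B x n). x k = y k) \<Longrightarrow> walk p B x n = walk p B y n"
proof (induction n)
  case 0 then show ?case by simp
next
  case (Suc n)
  obtain v c where e: "walk p B x n = (v, c)" by (cases "walk p B x n")
  have "\<forall>k < snd (walk p B x n). x k = y k" using Suc.prems walk_cnt_mono1[of p B x n] by auto
  then have e2: "walk p B y n = (v, c)" using Suc.IH e by simp
  show ?case
  proof (cases "spl p v \<and> B c \<le> n")
    case True
    then have "x c = y c" using Suc.prems walk_Suc_T[OF e] by simp
    then show ?thesis using walk_Suc_T[OF e] walk_Suc_T[OF e2] True by simp
  next
    case False
    then show ?thesis using walk_Suc_F[OF e False] walk_Suc_F[OF e2 False] by simp
  qed
qed


lemma walk_in: assumes "perfect_tree p" shows "fst (walk p B x n) \<in> p"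
proof (induction n)
  case 0
  obtain s where "s \<in> p" using assms unfolding perfect_tree_def by blast
  then show ?case using perfect_take[OF assms, of s 0] by simp
next
  case (Suc n)
  obtain v c where e: "walk p B x n = (v, c)" by (cases "walk p B x n")
  have v: "v \<in> p" using Suc.IH e by simp
  have c: "v @ [True] \<in> p \<or> v @ [False] \<in> p" using perfect_child[OF assms v] .
  show ?case
  proof (cases "spl p v \<and> B c \<le> n")
    case True
    then show ?thesis using walk_Suc_T[OF e] by (cases "x c") (auto simp: spl_def)
  next
    case False
    then show ?thesis using walk_Suc_F[OF e False] c by (cases "v @ [True] \<in> p") auto
  qed
qed

lemma walk_det: "fst (walk p B x n) = fst (walk p B y n) \<Longrightarrow>
   snd (walk p B x n) = snd (walk p B y n) \<and> (\<forall>k < snd (walk p B x n). x k = y k)"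
proof (induction n)
  case 0 then show ?case by simp
next
  case (Suc n)
  obtain v c where e: "walk p B x n = (v, c)" by (cases "walk p B x n")
  obtain v' c' where e': "walk p B y n = (v', c')" by (cases "walk p B y n")
  have "fst (walk p B x n) = fst (walk p B y n)"
    using Suc.prems walk_take[of n "Suc n" p B x] walk_take[of n "Suc n" p B y] by simp
  with Suc.IH have ih: "snd (walk p B x n) = snd (walk p B y n)" "\<forall>k < snd (walk p B x n). x k = y k"
    by auto
  have vv: "v' = v" "c' = c" using ih(1) \<open>fst (walk p B x n) = fst (walk p B y n)\<close> e e' by auto
  have ag: "\<forall>k<c. x k = y k" using ih(2) e by simp
  show ?case
  proof (cases "spl p v \<and> B c \<le> n")
    case True
    have "x c = y c" using Suc.prems walk_Suc_T[OF e] walk_Suc_T[of p B y n v c] e' vv True by auto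
    then show ?thesis using walk_Suc_T[OF e] walk_Suc_T[of p B y n v c] e' vv True ag
      by (auto simp: less_Suc_eq)
  next
    case False
    then show ?thesis using walk_Suc_F[OF e False] walk_Suc_F[of p B y n v c] e' vv ag by auto
  qed
qed

lemma finite_len: "finite {v :: bool list. length v = n}"
  using finite_lists_length_eq[of "UNIV :: bool set" n] by simp

lemma walk_grow: assumes "perfect_tree p" shows "\<exists>L. \<forall>x. j \<le> snd (walk p B x L)"
proof (induction j)
  case 0 then show ?case by simp
next
  case (Suc j)
  then obtain L where L: "\<And>x. j \<le> snd (walk p B x L)" by blast
  define L1 where "L1 = L + B j"
  define U where "U v = (SOME u. u \<in> p \<and> spl p u \<and> length v \<le> length u \<and> take (length v) u = v)" for v
  have U: "U v \<in> p \<and> spl p (U v) \<and> length v \<le> length (U v) \<and> take (length v) (U v) = v" if "v \<in> p" for v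
  proof -
    have "\<exists>u. u \<in> p \<and> spl p u \<and> length v \<le> length u \<and> take (length v) u = v"
      using assms that unfolding perfect_tree_def spl_def by blast
    then show ?thesis unfolding U_def by (rule someI_ex)
  qed
  define Ls where "Ls = {v :: bool list. length v = L1}"
  have finLs: "finite Ls" unfolding Ls_def by (rule finite_len)
  define L' where "L' = Suc (\<Sum>v\<in>Ls. length (U v))"
  have "Suc j \<le> snd (walk p B x L')" for x
  proof -
    define v where "v = fst (walk p B x L1)"
    have vp: "v \<in> p" unfolding v_def by (rule walk_in[OF assms])
    have vl: "length v = L1" unfolding v_def by (simp add: walk_len)
    define u where "u = U v"
    define N where "N = length u"
    have Uv: "u \<in> p" "spl p u" "L1 \<le> N" "take L1 u = v" using U[OF vp] vl unfolding u_def N_def by auto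
    have "N \<le> (\<Sum>v\<in>Ls. length (U v))" unfolding N_def u_def
      by (rule member_le_sum) (use finLs vl in \<open>auto simp: Ls_def\<close>)
    then have NL: "Suc N \<le> L'" unfolding L'_def by simp
    have cL1: "j \<le> snd (walk p B x k)" if "L1 \<le> k" for k
      using L[of x] walk_cnt_mono[of L k p B x] that unfolding L1_def by simp
    have "Suc j \<le> snd (walk p B x (Suc N))"
    proof (rule ccontr)
      assume "\<not> Suc j \<le> snd (walk p B x (Suc N))"
      then have hi: "snd (walk p B x k) \<le> j" if "k \<le> Suc N" for k
        using walk_cnt_mono[OF that, of p B x] by simp
      have cj: "snd (walk p B x k) = j" if "L1 \<le> k" "k \<le> Suc N" for k
        using hi[OF that(2)] cL1[OF that(1)] by simp
      have follow: "k \<le> N \<longrightarrow> fst (walk p B x k) = take k u" if "L1 \<le> k" for k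
        using that
      proof (induction k rule: dec_induct)
        case base then show ?case using Uv(4) unfolding v_def by simp
      next
        case (step k)
        show ?case
        proof
          assume kN: "Suc k \<le> N"
          define w where "w = fst (walk p B x k)"
          have w: "w = take k u" using step kN unfolding w_def by simp
          have ck: "snd (walk p B x k) = j" using cj[of k] step kN by simp
          have e: "walk p B x k = (w, j)" using ck unfolding w_def by (metis prod.collapse)
          have Bj: "B j \<le> k" using step unfolding L1_def by simp
          have nspl: "\<not> spl p w"
          proof
            assume "spl p w"
            then have "snd (walk p B x (Suc k)) = Suc j" using walk_Suc_T[OF e _ Bj] by simp
            moreover have "snd (walk p B x (Suc k)) \<le> j" using hi[of "Suc k"] kN by simp
            ultimately show False by simp
          qed
          have tk: "take (Suc k) u = w @ [u ! k]" using w kN unfolding N_def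
            by (simp add: take_Suc_conv_app_nth)
          have "w @ [u ! k] \<in> p" using perfect_take[OF assms Uv(1), of "Suc k"] tk by simp
          then have "w @ [w @ [True] \<in> p] = w @ [u ! k]" using nspl unfolding spl_def
            by (cases "u ! k") auto
          then show "fst (walk p B x (Suc k)) = take (Suc k) u"
            using walk_Suc_F[OF e] nspl tk by simp
        qed
      qed
      have fN: "fst (walk p B x N) = u" using follow[of N] Uv(3) unfolding N_def by simp
      have eN: "walk p B x N = (u, j)" using fN cj[of N] Uv(3) by (metis le_SucI order_refl prod.collapse)
      have "snd (walk p B x (Suc N)) = Suc j" using walk_Suc_T[OF eN Uv(2)] Uv(3) unfolding L1_def by simp
      then show False using hi[of "Suc N"] by simp
    qed
    then show ?thesis using walk_cnt_mono[OF NL, of p B x] by simp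
  qed
  then show ?case by blast
qed

lemma rho_dep: "depends_only_on (rho p B i) {j. j \<le> i}"
  unfolding depends_only_on_def
proof (intro allI impI)
  fix a b :: assignment
  assume "\<forall>j\<in>{j. j \<le> i}. a j = b j"
  then have "\<forall>k < snd (walk p B a (Suc i)). a k = b k"
    using walk_cnt_le[of p B a "Suc i"] by auto
  then have "walk p B a (Suc i) = walk p B b (Suc i)" by (rule walk_dep)
  then show "rho p B i a = rho p B i b" unfolding rho_def by simp
qed

lemma dep_term: "depends_only_on t {j. j \<le> i} \<Longrightarrow> is_term t"
  unfolding is_term_def by (rule exI[of _ "{j. j \<le> i}"]) simp

lemma rho_Sstar: assumes "perfect_tree p" shows "(\<lambda>i. rho p B i) \<in> Sstar"
  unfolding Sstar_def
proof (intro CollectI conjI allI)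
  fix i show "is_term (rho p B i)" by (rule dep_term[OF rho_dep])
next
  fix i show "depends_only_on (rho p B i) {j. j \<le> i}" by (rule rho_dep)
next
  fix j
  obtain L where L: "\<And>x. Suc j \<le> snd (walk p B x L)" using walk_grow[OF assms, of "Suc j" B] by blast
  have "\<forall>a b. (\<forall>i\<in>{..<L}. rho p B i a = rho p B i b) \<longrightarrow> a j = b j"
  proof (intro allI impI)
    fix a b :: assignment
    assume "\<forall>i\<in>{..<L}. rho p B i a = rho p B i b"
    then have "map (\<lambda>i. rho p B i a) [0..<L] = map (\<lambda>i. rho p B i b) [0..<L]" by simp
    then have "fst (walk p B a L) = fst (walk p B b L)" by (simp add: walk_map)
    then show "a j = b j" using walk_det[of p B a L b] L[of a] by simp
  qed
  then show "\<exists>F. finite F \<and> (\<forall>a b. (\<forall>i\<in>F. rho p B i a = rho p B i b) \<longrightarrow> a j = b j)"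
    by blast
qed


lemma Sstar_dep: "ts \<in> Sstar \<Longrightarrow> depends_only_on (ts i) {j. j \<le> i}"
  unfolding Sstar_def by blast

lemma Sstar_fin: "ts \<in> Sstar \<Longrightarrow> \<exists>F. finite F \<and> (\<forall>a b. (\<forall>i\<in>F. ts i a = ts i b) \<longrightarrow> a j = b j)"
  unfolding Sstar_def by blast

lemma take_map_upt: "m \<le> n \<Longrightarrow> take m (map f [0..<n]) = map f [0..<m]"
  by (simp add: take_map)

lemma Psi_intro: "map (\<lambda>i. ts i a) [0..<n] \<in> Psi ts"
  unfolding Psi_def by auto

lemma Psi_elim: "s \<in> Psi ts \<Longrightarrow> \<exists>n a. s = map (\<lambda>i. ts i a) [0..<n]"
  unfolding Psi_def by auto

lemma Psi_perfect: assumes ts: "ts \<in> Sstar" shows "perfect_tree (Psi ts)"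
  unfolding perfect_tree_def
proof (intro conjI ballI allI)
  show "Psi ts \<noteq> {}" using Psi_intro by blast
next
  fix s m assume "s \<in> Psi ts"
  then obtain n a where s: "s = map (\<lambda>i. ts i a) [0..<n]" using Psi_elim by blast
  have tm: "take m s = map (\<lambda>i. ts i a) [0..<min m n]"
  proof (cases "m \<le> n")
    case True
    then show ?thesis unfolding s using take_map_upt[OF True] by (simp add: min_def)
  next
    case False
    then have "take m s = s" unfolding s by simp
    then show ?thesis using False unfolding s by (simp add: min_def)
  qed
  show "take m s \<in> Psi ts" unfolding tm by (rule Psi_intro)
next
  fix s assume "s \<in> Psi ts"
  then obtain n a where s: "s = map (\<lambda>i. ts i a) [0..<n]" using Psi_elim by blast
  define b where "b = a(n := \<not> a n)"
  have "\<exists>F. finite F \<and> (\<forall>a b. (\<forall>i\<in>F. ts i a = ts i b) \<longrightarrow> a n = b n)"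
    by (rule Sstar_fin[OF ts])
  then obtain F where Fc: "finite F \<and> (\<forall>a b. (\<forall>i\<in>F. ts i a = ts i b) \<longrightarrow> a n = b n)" ..
  then have F: "finite F" "\<forall>a b. (\<forall>i\<in>F. ts i a = ts i b) \<longrightarrow> a n = b n" by simp_all
  have ex: "\<exists>i. ts i a \<noteq> ts i b"
  proof (rule ccontr)
    assume "\<not> (\<exists>i. ts i a \<noteq> ts i b)"
    then have "\<forall>i\<in>F. ts i a = ts i b" by simp
    then have "a n = b n" using F(2) by simp
    then show False unfolding b_def by simp
  qed
  define m where "m = (LEAST i. ts i a \<noteq> ts i b)"
  have m: "ts m a \<noteq> ts m b" unfolding m_def using ex by (rule LeastI_ex)
  have bel: "ts i a = ts i b" if "i < m" for i
    using not_less_Least[of i "\<lambda>i. ts i a \<noteq> ts i b"] that unfolding m_def by simp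
  have agn: "ts i a = ts i b" if "i < n" for i
  proof -
    have "\<forall>j\<in>{j. j \<le> i}. a j = b j" using that by (simp add: b_def)
    moreover have "depends_only_on (ts i) {j. j \<le> i}" by (rule Sstar_dep[OF ts])
    ultimately show ?thesis unfolding depends_only_on_def by simp
  qed
  have nm: "n \<le> m"
  proof (rule ccontr)
    assume "\<not> n \<le> m"
    then have "m < n" by simp
    then have "ts m a = ts m b" by (rule agn)
    then show False using m by simp
  qed
  define u where "u = map (\<lambda>i. ts i a) [0..<m]"
  have ub: "u = map (\<lambda>i. ts i b) [0..<m]" unfolding u_def by (rule map_cong[OF refl]) (simp add: bel)
  have u0: "u \<in> Psi ts" unfolding u_def by (rule Psi_intro)
  have "u @ [ts m a] = map (\<lambda>i. ts i a) [0..<Suc m]" unfolding u_def by simp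
  then have u1: "u @ [ts m a] \<in> Psi ts" using Psi_intro by metis
  have "u @ [ts m b] = map (\<lambda>i. ts i b) [0..<Suc m]" unfolding ub by simp
  then have u2: "u @ [ts m b] \<in> Psi ts" using Psi_intro by metis
  have ls: "length s = n" unfolding s by simp
  have l1: "length s \<le> length u" unfolding ls u_def using nm by simp
  have l2: "take (length s) u = s" unfolding ls unfolding u_def s using nm by (rule take_map_upt)
  have l3: "u @ [False] \<in> Psi ts \<and> u @ [True] \<in> Psi ts"
  proof (cases "ts m a")
    case True
    then have "\<not> ts m b" using m by simp
    then show ?thesis using u1 u2 True by simp
  next
    case False
    then have "ts m b" using m by simp
    then show ?thesis using u1 u2 False by simp
  qed
  show "\<exists>u\<in>Psi ts. length s \<le> length u \<and> take (length s) u = s \<and> u @ [False] \<in> Psi ts \<and> u @ [True] \<in> Psi ts"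
    using u0 l1 l2 l3 by blast
qed

lemma walk_reach: assumes "perfect_tree p"
  shows "v \<in> p \<longrightarrow> (\<exists>x. fst (walk p (\<lambda>_. 0) x (length v)) = v)"
proof (induction v rule: rev_induct)
  case Nil then show ?case by simp
next
  case (snoc b w)
  show ?case
  proof
    assume wb: "w @ [b] \<in> p"
    have "w \<in> p" using perfect_take[OF assms wb, of "length w"] by simp
    then obtain x' where x': "fst (walk p (\<lambda>_. 0) x' (length w)) = w" using snoc by blast
    define c where "c = snd (walk p (\<lambda>_. 0) x' (length w))"
    have e: "walk p (\<lambda>_. 0) x' (length w) = (w, c)" using x' unfolding c_def by (metis prod.collapse)
    show "\<exists>x. fst (walk p (\<lambda>_. 0) x (length (w @ [b]))) = w @ [b]"
    proof (cases "spl p w")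
      case True
      define x where "x = x'(c := b)"
      have "walk p (\<lambda>_. 0) x' (length w) = walk p (\<lambda>_. 0) x (length w)"
        by (rule walk_dep) (simp add: e x_def)
      then have e2: "walk p (\<lambda>_. 0) x (length w) = (w, c)" using e by simp
      have "fst (walk p (\<lambda>_. 0) x (Suc (length w))) = w @ [b]"
        using walk_Suc_T[OF e2 True] by (simp add: x_def)
      then show ?thesis by auto
    next
      case False
      then have nc: "\<not> (spl p w \<and> (\<lambda>_. 0::nat) c \<le> length w)" by simp
      have "w @ [w @ [True] \<in> p] = w @ [b]" using False wb unfolding spl_def by (cases b) auto
      then have "fst (walk p (\<lambda>_. 0) x' (Suc (length w))) = w @ [b]"
        using walk_Suc_F[OF e nc] by simp
      then show ?thesis by auto
    qed
  qed
qed

lemma Psi_rho: assumes "perfect_tree p" shows "Psi (\<lambda>i. rho p (\<lambda>_. 0) i) = p"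
proof
  show "Psi (\<lambda>i. rho p (\<lambda>_. 0) i) \<subseteq> p"
    unfolding Psi_def using walk_in[OF assms] by (auto simp: walk_map)
next
  show "p \<subseteq> Psi (\<lambda>i. rho p (\<lambda>_. 0) i)"
  proof
    fix v assume "v \<in> p"
    then obtain x where "fst (walk p (\<lambda>_. 0) x (length v)) = v" using walk_reach[OF assms] by blast
    then have "v = map (\<lambda>i. rho p (\<lambda>_. 0) i x) [0..<length v]" by (simp add: walk_map)
    then show "v \<in> Psi (\<lambda>i. rho p (\<lambda>_. 0) i)" unfolding Psi_def by blast
  qed
qed


lemma fin_bound: assumes "finite (F :: nat set)" shows "\<exists>k. F \<subseteq> {..<k}"
proof -
  have "i < Suc (\<Sum>F)" if "i \<in> F" for i
    using member_le_sum[of i F "\<lambda>x. x"] that assms by simp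
  then show ?thesis by blast
qed

definition detl :: "(nat \<Rightarrow> bterm) \<Rightarrow> nat \<Rightarrow> nat \<Rightarrow> bool" where
  "detl s L j \<longleftrightarrow> (\<forall>a b. map (\<lambda>i. s i a) [0..<L] = map (\<lambda>i. s i b) [0..<L] \<longrightarrow> a j = b j)"

lemma detl_ex: assumes "s \<in> Sstar" shows "\<exists>L. detl s L j"
proof -
  have "\<exists>F. finite F \<and> (\<forall>a b. (\<forall>i\<in>F. s i a = s i b) \<longrightarrow> a j = b j)"
    by (rule Sstar_fin[OF assms])
  then obtain F where Fc: "finite F \<and> (\<forall>a b. (\<forall>i\<in>F. s i a = s i b) \<longrightarrow> a j = b j)" ..
  from fin_bound[OF conjunct1[OF Fc]] obtain k where k: "F \<subseteq> {..<k}" ..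
  have "detl s k j" unfolding detl_def
  proof (intro allI impI)
    fix a b :: assignment
    assume e: "map (\<lambda>i. s i a) [0..<k] = map (\<lambda>i. s i b) [0..<k]"
    have "\<forall>i\<in>F. s i a = s i b"
    proof
      fix i assume "i \<in> F"
      then have "i < k" using k by auto
      then show "s i a = s i b" using arg_cong[OF e, of "\<lambda>l. l ! i"] by simp
    qed
    then show "a j = b j" using Fc by simp
  qed
  then show ?thesis ..
qed

lemma detl_mono: assumes "detl s L j" "L \<le> L'" shows "detl s L' j"
  unfolding detl_def
proof (intro allI impI)
  fix a b :: assignment
  assume "map (\<lambda>i. s i a) [0..<L'] = map (\<lambda>i. s i b) [0..<L']"
  then have "take L (map (\<lambda>i. s i a) [0..<L']) = take L (map (\<lambda>i. s i b) [0..<L'])"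
    by (rule arg_cong)
  then have "map (\<lambda>i. s i a) [0..<L] = map (\<lambda>i. s i b) [0..<L]"
    using take_map_upt[OF assms(2), of "\<lambda>i. s i a"] take_map_upt[OF assms(2), of "\<lambda>i. s i b"] by simp
  then show "a j = b j" using assms(1) unfolding detl_def by blast
qed

lemma lower:
  assumes s: "s \<in> Sstar" and r: "perfect_tree r" and rs: "r \<subseteq> Psi s"
    and Lmono: "\<And>i j. i \<le> j \<Longrightarrow> L i \<le> L j" and Lgt: "\<And>j. j < L j"
    and Ldet: "\<And>j. detl s (L j) j"
  shows "Sstar_le (\<lambda>i. rho r L i) s"
proof -
  define node where "node n x = fst (walk r L x n)" for n x
  define A where "A k x = (SOME a. map (\<lambda>i. s i a) [0..<L k] = node (L k) x)" for k x
  define \<phi> where "\<phi> k x = A k x k" for k x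
  have Aex: "map (\<lambda>i. s i (A k x)) [0..<L k] = node (L k) x" for k x
  proof -
    have "node (L k) x \<in> Psi s" using walk_in[OF r] rs unfolding node_def by blast
    then obtain n a where na: "node (L k) x = map (\<lambda>i. s i a) [0..<n]" using Psi_elim by blast
    have "length (node (L k) x) = L k" unfolding node_def by (simp add: walk_len)
    then have "n = L k" using na by simp
    then have "\<exists>a. map (\<lambda>i. s i a) [0..<L k] = node (L k) x" using na by (intro exI[of _ a]) simp
    then show ?thesis unfolding A_def by (rule someI_ex)
  qed
  have key: "s i (\<lambda>k. \<phi> k x) = rho r L i x" for i x
  proof -
    define as where "as = A i x"
    have agree: "\<phi> k x = as k" if "k \<le> i" for k
    proof -
      have Lki: "L k \<le> L i" using Lmono[OF that] .
      have "map (\<lambda>l. s l (A k x)) [0..<L k] = node (L k) x" by (rule Aex)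
      also have "\<dots> = take (L k) (node (L i) x)" unfolding node_def by (rule walk_take[OF Lki])
      also have "\<dots> = take (L k) (map (\<lambda>l. s l as) [0..<L i])" unfolding as_def using Aex by simp
      also have "\<dots> = map (\<lambda>l. s l as) [0..<L k]" by (rule take_map_upt[OF Lki])
      finally have "map (\<lambda>l. s l (A k x)) [0..<L k] = map (\<lambda>l. s l as) [0..<L k]" .
      then show ?thesis using Ldet[of k, unfolded detl_def, rule_format] unfolding \<phi>_def by blast
    qed
    have "s i (\<lambda>k. \<phi> k x) = s i as"
      using Sstar_dep[OF s, of i] agree unfolding depends_only_on_def by simp
    also have "\<dots> = map (\<lambda>l. s l as) [0..<L i] ! i" using Lgt[of i] by simp
    also have "\<dots> = node (L i) x ! i" unfolding as_def using Aex by simp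
    also have "\<dots> = rho r L i x" unfolding node_def using Lgt[of i] by (rule walk_nth)
    finally show ?thesis .
  qed
  have subst_eq: "(\<lambda>i. rho r L i) = subst_seq s \<phi>"
    unfolding subst_seq_def subst_def using key by (intro ext) simp
  have phidep: "depends_only_on (\<phi> k) {j. j \<le> k}" for k
    unfolding depends_only_on_def
  proof (intro allI impI)
    fix x y :: assignment
    assume ag: "\<forall>j\<in>{j. j \<le> k}. x j = y j"
    have "\<forall>m < snd (walk r L x (L k)). x m = y m"
    proof (intro allI impI)
      fix m assume "m < snd (walk r L x (L k))"
      then have "L m < L k" by (rule walk_cnt_B)
      then have "m < k" using Lmono[of k m] by (metis not_le)
      then show "x m = y m" using ag by simp
    qed
    then have "walk r L x (L k) = walk r L y (L k)" by (rule walk_dep)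
    then have "A k x = A k y" unfolding A_def node_def by simp
    then show "\<phi> k x = \<phi> k y" unfolding \<phi>_def by simp
  qed
  have rhoS: "(\<lambda>i. rho r L i) \<in> Sstar" by (rule rho_Sstar[OF r])
  have "\<phi> \<in> Sstar"
    unfolding Sstar_def
  proof (intro CollectI conjI allI)
    fix i show "is_term (\<phi> i)" by (rule dep_term[OF phidep])
  next
    fix i show "depends_only_on (\<phi> i) {j. j \<le> i}" by (rule phidep)
  next
    fix j
    have "\<exists>F. finite F \<and> (\<forall>a b. (\<forall>i\<in>F. rho r L i a = rho r L i b) \<longrightarrow> a j = b j)"
      by (rule Sstar_fin[OF rhoS])
    then obtain F where Fc: "finite F \<and> (\<forall>a b. (\<forall>i\<in>F. rho r L i a = rho r L i b) \<longrightarrow> a j = b j)" ..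
    from fin_bound[OF conjunct1[OF Fc]] obtain M where M: "F \<subseteq> {..<M}" ..
    have "\<forall>a b. (\<forall>i\<in>{..<M}. \<phi> i a = \<phi> i b) \<longrightarrow> a j = b j"
    proof (intro allI impI)
      fix a b :: assignment
      assume ag: "\<forall>i\<in>{..<M}. \<phi> i a = \<phi> i b"
      have "\<forall>i\<in>F. rho r L i a = rho r L i b"
      proof
        fix i assume "i \<in> F"
        then have iM: "i < M" using M by auto
        have "\<forall>k\<in>{k. k \<le> i}. \<phi> k a = \<phi> k b" using ag iM by auto
        then have "s i (\<lambda>k. \<phi> k a) = s i (\<lambda>k. \<phi> k b)"
          using Sstar_dep[OF s, of i, unfolded depends_only_on_def, rule_format, of "\<lambda>k. \<phi> k a" "\<lambda>k. \<phi> k b"]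
          by simp
        then show "rho r L i a = rho r L i b" using key by simp
      qed
      then show "a j = b j" by (rule mp[OF spec[OF spec[OF conjunct2[OF Fc]]]])
    qed
    then show "\<exists>F. finite F \<and> (\<forall>a b. (\<forall>i\<in>F. \<phi> i a = \<phi> i b) \<longrightarrow> a j = b j)"
      by (intro exI[of _ "{..<M}"]) simp
  qed
  then show ?thesis unfolding Sstar_le_def using subst_eq by blast
qed

theorem mainTheorem2:
  shows "(\<forall>ts\<in>Sstar. perfect_tree (Psi ts))
     \<and> Psi ` Sstar = Sacks
     \<and> (\<forall>s\<in>Sstar. \<forall>t\<in>Sstar. Sstar_le s t \<longrightarrow> Psi s \<subseteq> Psi t)
     \<and> (\<forall>s\<in>Sstar. \<forall>t\<in>Sstar. Sstar_incompatible s t \<longrightarrow> Sacks_incompatible (Psi s) (Psi t))"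
proof (intro conjI)
  show P1: "\<forall>ts\<in>Sstar. perfect_tree (Psi ts)" using Psi_perfect by blast
  show "Psi ` Sstar = Sacks"
  proof
    show "Psi ` Sstar \<subseteq> Sacks" using Psi_perfect unfolding Sacks_def by blast
  next
    show "Sacks \<subseteq> Psi ` Sstar"
    proof
      fix p assume "p \<in> Sacks"
      then have p: "perfect_tree p" unfolding Sacks_def by simp
      have "p = Psi (\<lambda>i. rho p (\<lambda>_. 0) i)" using Psi_rho[OF p] by simp
      moreover have "(\<lambda>i. rho p (\<lambda>_. 0) i) \<in> Sstar" by (rule rho_Sstar[OF p])
      ultimately show "p \<in> Psi ` Sstar" by blast
    qed
  qed
  show "\<forall>s\<in>Sstar. \<forall>t\<in>Sstar. Sstar_le s t \<longrightarrow> Psi s \<subseteq> Psi t"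
  proof (intro ballI impI subsetI)
    fix s t v assume "s \<in> Sstar" "t \<in> Sstar" "Sstar_le s t" "v \<in> Psi s"
    then obtain \<phi> where ph: "s = subst_seq t \<phi>" unfolding Sstar_le_def by blast
    obtain n a where "v = map (\<lambda>i. s i a) [0..<n]" using Psi_elim \<open>v \<in> Psi s\<close> by blast
    then have vt: "v = map (\<lambda>i. t i (\<lambda>k. \<phi> k a)) [0..<n]" unfolding ph subst_seq_def subst_def by simp
    show "v \<in> Psi t" unfolding vt by (rule Psi_intro)
  qed
  show "\<forall>s\<in>Sstar. \<forall>t\<in>Sstar. Sstar_incompatible s t \<longrightarrow> Sacks_incompatible (Psi s) (Psi t)"
  proof (intro ballI impI)
    fix s t assume s: "s \<in> Sstar" and t: "t \<in> Sstar" and inc: "Sstar_incompatible s t"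
    show "Sacks_incompatible (Psi s) (Psi t)"
      unfolding Sacks_incompatible_def
    proof
      assume "\<exists>r\<in>Sacks. r \<subseteq> Psi s \<and> r \<subseteq> Psi t"
      then obtain r where r: "perfect_tree r" "r \<subseteq> Psi s" "r \<subseteq> Psi t" unfolding Sacks_def by blast
      have "\<forall>j. \<exists>D. detl s D j" using detl_ex[OF s] by blast
      then have "\<exists>f. \<forall>j. detl s (f j) j" by (rule choice)
      then obtain Ds where Ds0: "\<forall>j. detl s (Ds j) j" ..
      have Ds: "detl s (Ds j) j" for j using Ds0 by simp
      have "\<forall>j. \<exists>D. detl t D j" using detl_ex[OF t] by blast
      then have "\<exists>f. \<forall>j. detl t (f j) j" by (rule choice)
      then obtain Dt where Dt0: "\<forall>j. detl t (Dt j) j" ..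
      have Dt: "detl t (Dt j) j" for j using Dt0 by simp
      define L where "L j = Suc j + (\<Sum>k\<le>j. Ds k + Dt k)" for j
      have Lmono: "L i \<le> L j" if "i \<le> j" for i j
      proof -
        have "(\<Sum>k\<le>i. Ds k + Dt k) \<le> (\<Sum>k\<le>j. Ds k + Dt k)"
          by (rule sum_mono2) (use that in auto)
        then show ?thesis unfolding L_def using that by simp
      qed
      have Lgt: "j < L j" for j unfolding L_def by simp
      have Dle: "Ds j + Dt j \<le> (\<Sum>k\<le>j. Ds k + Dt k)" for j
        by (rule member_le_sum) auto
      have Ls: "detl s (L j) j" for j
        by (rule detl_mono[OF Ds]) (use Dle[of j] in \<open>simp add: L_def\<close>)
      have Lt: "detl t (L j) j" for j
        by (rule detl_mono[OF Dt]) (use Dle[of j] in \<open>simp add: L_def\<close>)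
      have "Sstar_le (\<lambda>i. rho r L i) s" by (rule lower[OF s r(1) r(2) Lmono Lgt Ls])
      moreover have "Sstar_le (\<lambda>i. rho r L i) t" by (rule lower[OF t r(1) r(3) Lmono Lgt Lt])
      moreover have "(\<lambda>i. rho r L i) \<in> Sstar" by (rule rho_Sstar[OF r(1)])
      ultimately show False using inc unfolding Sstar_incompatible_def by blast
    qed
  qed
qed

end
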